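(* Let $\Gamma$ be a regular axis-parallel square grid in the plane whose squares have diameter $1$ (side length $1/\sqrt{2}$), and call the open squares of $\Gamma$ cells. Let $p$ and $q$ be two points lying in different cells $\pi_p$ and $\pi_q$, and let $D(p,q)$ be the closed disk having segment $pq$ as a diameter. Let $X$ be the set of cells consisting of $\pi_p$, $\pi_q$, and all $+$-neighbors of $\pi_p$ and of $\pi_q$. 1. If $|pq|\le 1$, then $D(p,q)$ does not intersect any cell outside the neighborhoods of $\pi_p$ and $\pi_q$. 2. If $|pq|\le 1$, then $D(p,q)$ intersects at most two cells that are not in $X$. 3. If $|pq|\le 1/\sqrt{2}$, then $D(p,q)$ does not intersect any cell that is not in $X$.
   Context: The neighbors of a cell $\pi$ are the eight cells that share a side or a corner with $\pi$; the $+$-neighbors of $\pi$ are the four cells sharing a side with $\pi$. The neighborhood of $\pi$ consists of $\pi$ together with its eight neighbors. Cells are open (they do not contain their boundary), and disks are closed. *)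

theory Defs
  imports "HOL-Analysis.Analysis"
begin

text \<open>Points of the plane are elements of real \<times> real; the product metric on
  real \<times> real is the Euclidean metric.\<close>

definition cell :: "real \<times> real \<Rightarrow> int \<times> int \<Rightarrow> (real \<times> real) set" where
  "cell o' c = {z. fst o' + real_of_int (fst c) / sqrt 2 < fst z
                  \<and> fst z < fst o' + real_of_int (fst c + 1) / sqrt 2
                  \<and> snd o' + real_of_int (snd c) / sqrt 2 < snd z
                  \<and> snd z < snd o' + real_of_int (snd c + 1) / sqrt 2}"

definition is_neighbor :: "int \<times> int \<Rightarrow> int \<times> int \<Rightarrow> bool" where
  "is_neighbor c d \<longleftrightarrow> d \<noteq> c \<and> \<bar>fst d - fst c\<bar> \<le> 1 \<and> \<bar>snd d - snd c\<bar> \<le> 1"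

definition is_plus_neighbor :: "int \<times> int \<Rightarrow> int \<times> int \<Rightarrow> bool" where
  "is_plus_neighbor c d \<longleftrightarrow> \<bar>fst d - fst c\<bar> + \<bar>snd d - snd c\<bar> = 1"

definition neighborhood :: "int \<times> int \<Rightarrow> (int \<times> int) set" where
  "neighborhood c = {c} \<union> {d. is_neighbor c d}"

definition diam_disk :: "real \<times> real \<Rightarrow> real \<times> real \<Rightarrow> (real \<times> real) set" where
  "diam_disk p q = cball ((1/2) *\<^sub>R (p + q)) (dist p q / 2)"

end

theory Submission
  imports Defs
begin

definition C5 :: "int \<Rightarrow> int \<Rightarrow> int \<Rightarrow> int \<Rightarrow> int \<Rightarrow> int \<Rightarrow> bool" where
 "C5 x y a1 b1 a2 b2 \<longleftrightarrow> \<bar>x-a1\<bar> \<le> 2 \<and> \<bar>y-b1\<bar> \<le> 2 \<and> \<bar>x-a2\<bar> \<le> 2 \<and> \<bar>y-b2\<bar> \<le> 2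
   \<and> \<not>(\<bar>x-a1\<bar> = 2 \<and> \<bar>y-b1\<bar> = 2) \<and> \<not>(\<bar>x-a1\<bar> = 2 \<and> \<bar>x-a2\<bar> = 2) \<and> \<not>(\<bar>x-a1\<bar> = 2 \<and> \<bar>y-b2\<bar> = 2)
   \<and> \<not>(\<bar>y-b1\<bar> = 2 \<and> \<bar>x-a2\<bar> = 2) \<and> \<not>(\<bar>y-b1\<bar> = 2 \<and> \<bar>y-b2\<bar> = 2) \<and> \<not>(\<bar>x-a2\<bar> = 2 \<and> \<bar>y-b2\<bar> = 2)"

definition P5 :: "int \<Rightarrow> int \<Rightarrow> int \<Rightarrow> int \<Rightarrow> bool" where
 "P5 x y u v \<longleftrightarrow> \<bar>x-u\<bar> \<le> 2 \<and> \<bar>y-v\<bar> \<le> 2 \<and> \<not>(\<bar>x-u\<bar> = 2 \<and> \<bar>y-v\<bar> = 2)"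

definition nX5 :: "int \<Rightarrow> int \<Rightarrow> int \<Rightarrow> int \<Rightarrow> int \<Rightarrow> int \<Rightarrow> bool" where
 "nX5 x y a1 b1 a2 b2 \<longleftrightarrow> (x,y) \<noteq> (a1,b1) \<and> (x,y) \<noteq> (a2,b2) \<and> \<bar>x-a1\<bar>+\<bar>y-b1\<bar> \<noteq> 1 \<and> \<bar>x-a2\<bar>+\<bar>y-b2\<bar> \<noteq> 1"

lemma comb3:
  fixes a1 b1 a2 b2 x1 y1 x2 y2 x3 y3 :: int
  assumes "(a1,b1) \<noteq> (a2,b2)" "P5 a1 b1 a2 b2"
   "C5 x1 y1 a1 b1 a2 b2" "C5 x2 y2 a1 b1 a2 b2" "C5 x3 y3 a1 b1 a2 b2"
   "nX5 x1 y1 a1 b1 a2 b2" "nX5 x2 y2 a1 b1 a2 b2" "nX5 x3 y3 a1 b1 a2 b2"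
   "P5 x1 y1 x2 y2" "P5 x1 y1 x3 y3" "P5 x2 y2 x3 y3"
   "(x1,y1) \<noteq> (x2,y2)" "(x1,y1) \<noteq> (x3,y3)" "(x2,y2) \<noteq> (x3,y3)"
  shows False
  using assms unfolding C5_def P5_def nX5_def by (smt (z3))

lemma dist_sq: "(dist z w)^2 = (fst z - fst w)^2 + (snd z - snd w)^2"
  by (cases z, cases w) (simp add: dist_Pair_Pair dist_real_def)

lemma disk_sum:
  assumes "z \<in> diam_disk p q"
  shows "(dist z p)^2 + (dist z q)^2 \<le> (dist p q)^2"
proof -
  let ?m = "(1/2) *\<^sub>R (p + q)"
  have "dist z ?m \<le> dist p q / 2" using assms unfolding diam_disk_def by (simp add: dist_commute)
  then have "(dist z ?m)^2 \<le> (dist p q / 2)^2" by (simp add: power_mono)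
  then have h: "(fst z - (fst p + fst q)/2)^2 + (snd z - (snd p + snd q)/2)^2
      \<le> ((fst p - fst q)^2 + (snd p - snd q)^2) / 4"
    unfolding dist_sq[of z] power_divide dist_sq[of p] by simp
  show ?thesis unfolding dist_sq using h by (simp add: power2_eq_square field_simps)
qed

lemma disk_pair:
  assumes "z1 \<in> diam_disk p q" "z2 \<in> diam_disk p q"
  shows "dist z1 z2 \<le> dist p q"
proof -
  let ?m = "(1/2) *\<^sub>R (p + q)"
  have "dist z1 ?m \<le> dist p q / 2" "dist z2 ?m \<le> dist p q / 2"
    using assms unfolding diam_disk_def by (simp_all add: dist_commute)
  then show ?thesis using dist_triangle[of z1 z2 ?m] by (simp add: dist_commute)
qed

lemma gap1:
  fixes ofs x y :: real and a b :: int
  assumes "ofs + a / sqrt 2 < x" "y < ofs + (b+1) / sqrt 2" "a - b \<ge> 2"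
  shows "(x-y)^2 > 1/2 \<and> (a - b \<ge> 3 \<longrightarrow> (x-y)^2 > 2)"
proof -
  have s: "sqrt 2 > 0" by simp
  have "x - y > (a - (b+1)) / sqrt 2"
    using assms(1,2) by (simp add: diff_divide_distrib)
  then have k: "x - y > (a - b - 1) / sqrt 2" by (simp add: algebra_simps)
  have "(a - b - 1) / sqrt 2 \<ge> 1 / sqrt 2"
    using assms(3) s by (simp add: divide_right_mono)
  then have "x - y > 1 / sqrt 2" using k by linarith
  then have "(x-y)^2 > (1/sqrt 2)^2" by (intro power_strict_mono) auto
  moreover have "(1/sqrt 2)^2 = (1/2::real)" by (simp add: power_divide)
  ultimately have A: "(x-y)^2 > 1/2" by simp
  have B: "(x-y)^2 > 2" if "a - b \<ge> 3"
  proof -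
    have "(a - b - 1) / sqrt 2 \<ge> 2 / sqrt 2"
      using that s by (simp add: divide_right_mono)
    then have "x - y > 2 / sqrt 2" using k by linarith
    then have "(x-y)^2 > (2/sqrt 2)^2" by (intro power_strict_mono) auto
    moreover have "(2/sqrt 2)^2 = (2::real)" by (simp add: power_divide)
    ultimately show ?thesis by simp
  qed
  show ?thesis using A B by blast
qed

lemma gap:
  fixes ofs x y :: real and a b :: int
  assumes "ofs + a / sqrt 2 < x" "x < ofs + (a+1) / sqrt 2"
    "ofs + b / sqrt 2 < y" "y < ofs + (b+1) / sqrt 2"
  shows "(\<bar>a - b\<bar> \<ge> 2 \<longrightarrow> (x-y)^2 > 1/2) \<and> (\<bar>a - b\<bar> \<ge> 3 \<longrightarrow> (x-y)^2 > 2)"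
proof (cases "a \<ge> b")
  case True
  then show ?thesis using gap1[of ofs a x y b] assms by auto
next
  case False
  then show ?thesis using gap1[of ofs b y x a] assms by (auto simp: power2_commute)
qed

lemma cellgap:
  assumes "w \<in> cell o' c" "w' \<in> cell o' c'"
  shows "(\<bar>fst c - fst c'\<bar> \<ge> 2 \<longrightarrow> (fst w - fst w')^2 > 1/2) \<and> (\<bar>fst c - fst c'\<bar> \<ge> 3 \<longrightarrow> (fst w - fst w')^2 > 2)
       \<and> (\<bar>snd c - snd c'\<bar> \<ge> 2 \<longrightarrow> (snd w - snd w')^2 > 1/2) \<and> (\<bar>snd c - snd c'\<bar> \<ge> 3 \<longrightarrow> (snd w - snd w')^2 > 2)"
  using assms unfolding cell_def
  using gap[of "fst o'" "fst c" "fst w" "fst c'" "fst w'"] gap[of "snd o'" "snd c" "snd w" "snd c'" "snd w'"]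
  by auto


lemma sqnn: "(x::real)^2 \<ge> 0" by simp

definition G5 :: "int \<Rightarrow> real \<Rightarrow> bool" where
  "G5 k A \<longleftrightarrow> k \<le> 1 \<or> (k = 2 \<and> A > 1/2) \<or> (k \<ge> 3 \<and> A > 2)"

lemma G5_of:
  fixes K :: int and A :: real
  assumes "(2 \<le> K \<longrightarrow> A > 1/2) \<and> (3 \<le> K \<longrightarrow> A > 2)"
  shows "G5 K A"
  using assms unfolding G5_def by (cases "K \<le> 1"; cases "K = 2"; auto)

lemma absP:
  fixes A B :: real and k l :: int
  assumes "G5 k A" "G5 l B" "A \<ge> 0" "B \<ge> 0" "A + B \<le> 1"
  shows "k \<le> 2 \<and> l \<le> 2 \<and> \<not> (k = 2 \<and> l = 2)"
  using assms unfolding G5_def by (elim disjE conjE; linarith)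

lemma absS:
  fixes A B :: real and k l :: int
  assumes "G5 k A" "G5 l B" "A \<ge> 0" "B \<ge> 0" "A + B \<le> 1/2"
  shows "k \<le> 1 \<and> l \<le> 1"
  using assms unfolding G5_def by (elim disjE conjE; linarith)

lemma absC:
  fixes A B A' B' :: real and k l k' l' :: int
  assumes "G5 k A" "G5 l B" "G5 k' A'" "G5 l' B'"
    "A \<ge> 0" "B \<ge> 0" "A' \<ge> 0" "B' \<ge> 0" "A + B + A' + B' \<le> 1"
  shows "k \<le> 2 \<and> l \<le> 2 \<and> k' \<le> 2 \<and> l' \<le> 2
   \<and> \<not>(k = 2 \<and> l = 2) \<and> \<not>(k = 2 \<and> k' = 2) \<and> \<not>(k = 2 \<and> l' = 2)
   \<and> \<not>(l = 2 \<and> k' = 2) \<and> \<not>(l = 2 \<and> l' = 2) \<and> \<not>(k' = 2 \<and> l' = 2)"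
  using assms unfolding G5_def by (elim disjE conjE; linarith)

lemma cellG:
  assumes "w \<in> cell o' c" "w' \<in> cell o' c'"
  shows "G5 \<bar>fst c - fst c'\<bar> ((fst w - fst w')^2)" "G5 \<bar>snd c - snd c'\<bar> ((snd w - snd w')^2)"
  using cellgap[OF assms] by (auto intro!: G5_of)

lemma touchC:
  assumes "p \<in> cell o' cp" "q \<in> cell o' cq" "z \<in> cell o' c"
    "(dist z p)^2 + (dist z q)^2 \<le> 1"
  shows "C5 (fst c) (snd c) (fst cp) (snd cp) (fst cq) (snd cq)"
proof -
  have "(fst z - fst p)^2 + (snd z - snd p)^2 + (fst z - fst q)^2 + (snd z - snd q)^2 \<le> 1"
    using assms(4) unfolding dist_sq by simp
  from absC[OF cellG[OF assms(3,1)] cellG[OF assms(3,2)] sqnn sqnn sqnn sqnn this]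
  show ?thesis unfolding C5_def .
qed

lemma pairP:
  assumes "w \<in> cell o' c" "w' \<in> cell o' c'" "dist w w' \<le> 1"
  shows "P5 (fst c) (snd c) (fst c') (snd c')"
proof -
  have "(dist w w')^2 \<le> 1" using assms(3) by (simp add: power_le_one)
  then have "(fst w - fst w')^2 + (snd w - snd w')^2 \<le> 1" unfolding dist_sq .
  from absP[OF cellG[OF assms(1,2)] sqnn sqnn this]
  show ?thesis unfolding P5_def .
qed

lemma smallD:
  assumes "w \<in> cell o' c" "w' \<in> cell o' c'" "(dist w w')^2 \<le> 1/2"
  shows "\<bar>fst c - fst c'\<bar> \<le> 1 \<and> \<bar>snd c - snd c'\<bar> \<le> 1"
proof -
  have "(fst w - fst w')^2 + (snd w - snd w')^2 \<le> 1/2" using assms(3) unfolding dist_sq .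
  from absS[OF cellG[OF assms(1,2)] sqnn sqnn this]
  show ?thesis .
qed

lemma nb_or:
  fixes K1 K2 K3 K4 :: int
  assumes "K1 \<le> 2" "K2 \<le> 2" "K3 \<le> 2" "K4 \<le> 2" "\<not>(K1 = 2 \<and> K3 = 2)" "\<not>(K1 = 2 \<and> K4 = 2)" "\<not>(K2 = 2 \<and> K3 = 2)" "\<not>(K2 = 2 \<and> K4 = 2)"
  shows "(K1 \<le> 1 \<and> K2 \<le> 1) \<or> (K3 \<le> 1 \<and> K4 \<le> 1)"
  using assms by linarith

lemma C5_nb:
  assumes "C5 (fst c) (snd c) (fst cp) (snd cp) (fst cq) (snd cq)"
  shows "c \<in> neighborhood cp \<union> neighborhood cq"
proof -
  have "(\<bar>fst c - fst cp\<bar> \<le> 1 \<and> \<bar>snd c - snd cp\<bar> \<le> 1) \<or> (\<bar>fst c - fst cq\<bar> \<le> 1 \<and> \<bar>snd c - snd cq\<bar> \<le> 1)"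
    using assms unfolding C5_def by (intro nb_or) auto
  then show ?thesis unfolding neighborhood_def is_neighbor_def by auto
qed

lemma p3int:
  fixes x y a1 b1 a2 b2 :: int
  assumes "(x,y) \<noteq> (a1,b1)" "(x,y) \<noteq> (a2,b2)" "\<bar>x-a1\<bar>+\<bar>y-b1\<bar> \<noteq> 1" "\<bar>x-a2\<bar>+\<bar>y-b2\<bar> \<noteq> 1"
   "\<bar>x-a1\<bar> \<le> 1" "\<bar>y-b1\<bar> \<le> 1" "\<bar>x-a2\<bar> \<le> 1" "\<bar>y-b2\<bar> \<le> 1" "\<bar>a1-a2\<bar> \<le> 1" "\<bar>b1-b2\<bar> \<le> 1"
  shows "(a1,b1) = (a2,b2)"
  using assms by (smt (z3) prod.inject)

lemma nbhd_sub: "neighborhood c \<subseteq> {fst c - 1..fst c + 1} \<times> {snd c - 1..snd c + 1}"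
  unfolding neighborhood_def is_neighbor_def by (auto simp: mem_Times_iff)

lemma nbhd_fin: "finite (neighborhood c)"
  by (rule finite_subset[OF nbhd_sub]) auto

theorem lemma5:
  fixes o' p q :: "real \<times> real" and cp cq :: "int \<times> int"
  assumes "p \<in> cell o' cp" and "q \<in> cell o' cq" and "cp \<noteq> cq"
  defines "X \<equiv> {cp, cq} \<union> {d. is_plus_neighbor cp d} \<union> {d. is_plus_neighbor cq d}"
  shows "(dist p q \<le> 1 \<longrightarrow>
            (\<forall>c. c \<notin> neighborhood cp \<union> neighborhood cq \<longrightarrow> cell o' c \<inter> diam_disk p q = {}))
       \<and> (dist p q \<le> 1 \<longrightarrow>
            finite {c. c \<notin> X \<and> cell o' c \<inter> diam_disk p q \<noteq> {}}
            \<and> card {c. c \<notin> X \<and> cell o' c \<inter> diam_disk p q \<noteq> {}} \<le> 2)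
       \<and> (dist p q \<le> 1 / sqrt 2 \<longrightarrow>
            (\<forall>c. c \<notin> X \<longrightarrow> cell o' c \<inter> diam_disk p q = {}))"
proof -
  have nX: "nX5 (fst c) (snd c) (fst cp) (snd cp) (fst cq) (snd cq)" if "c \<notin> X" for c
    using that unfolding X_def nX5_def is_plus_neighbor_def by (auto simp: prod_eq_iff)
  have touch: "C5 (fst c) (snd c) (fst cp) (snd cp) (fst cq) (snd cq)"
    if "dist p q \<le> 1" "z \<in> cell o' c" "z \<in> diam_disk p q" for c z
  proof -
    have "(dist p q)^2 \<le> 1" using that(1) by (simp add: power_le_one)
    then show ?thesis using touchC[OF assms(1,2) that(2)] disk_sum[OF that(3)] by linarith
  qed
  have P1: "cell o' c \<inter> diam_disk p q = {}"
    if d: "dist p q \<le> 1" and c: "c \<notin> neighborhood cp \<union> neighborhood cq" for c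
  proof (rule ccontr)
    assume "cell o' c \<inter> diam_disk p q \<noteq> {}"
    then obtain z where z: "z \<in> cell o' c" "z \<in> diam_disk p q" by blast
    have "C5 (fst c) (snd c) (fst cp) (snd cp) (fst cq) (snd cq)" using touch[OF d z] .
    then show False using c C5_nb by blast
  qed
  have P2: "finite {c. c \<notin> X \<and> cell o' c \<inter> diam_disk p q \<noteq> {}}
            \<and> card {c. c \<notin> X \<and> cell o' c \<inter> diam_disk p q \<noteq> {}} \<le> 2"
    if d: "dist p q \<le> 1"
  proof -
    define S where "S = {c. c \<notin> X \<and> cell o' c \<inter> diam_disk p q \<noteq> {}}"
    have "S \<subseteq> neighborhood cp \<union> neighborhood cq" unfolding S_def using P1[OF d] by blast
    then have fin: "finite S" using nbhd_fin finite_subset by blast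
    have "card S \<le> 2"
    proof (rule ccontr)
      assume "\<not> card S \<le> 2"
      then obtain T where T: "T \<subseteq> S" "card T = 3"
        using obtain_subset_with_card_n[of 3 S] by (metis not_less_eq_eq numeral_3_eq_3 numeral_2_eq_2)
      then obtain c1 c2 c3 where T3: "T = {c1,c2,c3}" "c1 \<noteq> c2" "c2 \<noteq> c3" "c1 \<noteq> c3"
        using card_3_iff by metis
      have mem: "c1 \<in> S" "c2 \<in> S" "c3 \<in> S" using T T3 by auto
      obtain z1 where z1: "z1 \<in> cell o' c1" "z1 \<in> diam_disk p q" "c1 \<notin> X" using mem(1) unfolding S_def by blast
      obtain z2 where z2: "z2 \<in> cell o' c2" "z2 \<in> diam_disk p q" "c2 \<notin> X" using mem(2) unfolding S_def by blast
      obtain z3 where z3: "z3 \<in> cell o' c3" "z3 \<in> diam_disk p q" "c3 \<notin> X" using mem(3) unfolding S_def by blast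
      have pq: "P5 (fst cp) (snd cp) (fst cq) (snd cq)" using pairP[OF assms(1,2) d] .
      have p12: "P5 (fst c1) (snd c1) (fst c2) (snd c2)"
        using pairP[OF z1(1) z2(1)] disk_pair[OF z1(2) z2(2)] d by linarith
      have p13: "P5 (fst c1) (snd c1) (fst c3) (snd c3)"
        using pairP[OF z1(1) z3(1)] disk_pair[OF z1(2) z3(2)] d by linarith
      have p23: "P5 (fst c2) (snd c2) (fst c3) (snd c3)"
        using pairP[OF z2(1) z3(1)] disk_pair[OF z2(2) z3(2)] d by linarith
      show False
        using comb3[of "fst cp" "snd cp" "fst cq" "snd cq" "fst c1" "snd c1" "fst c2" "snd c2" "fst c3" "snd c3",
            OF _ pq touch[OF d z1(1,2)] touch[OF d z2(1,2)] touch[OF d z3(1,2)]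
            nX[OF z1(3)] nX[OF z2(3)] nX[OF z3(3)] p12 p13 p23]
          assms(3) T3 by (simp add: prod_eq_iff)
    qed
    then show ?thesis using fin unfolding S_def by blast
  qed
  have P3: "cell o' c \<inter> diam_disk p q = {}"
    if d: "dist p q \<le> 1 / sqrt 2" and c: "c \<notin> X" for c
  proof (rule ccontr)
    assume "cell o' c \<inter> diam_disk p q \<noteq> {}"
    then obtain z where z: "z \<in> cell o' c" "z \<in> diam_disk p q" by blast
    have "(dist p q)^2 \<le> (1 / sqrt 2)^2" using d by (simp add: power_mono)
    then have d2: "(dist p q)^2 \<le> 1/2" by (simp add: power_divide)
    have s: "(dist z p)^2 + (dist z q)^2 \<le> 1/2" using disk_sum[OF z(2)] d2 by linarith
    have "(dist z p)^2 \<le> 1/2" "(dist z q)^2 \<le> 1/2" using s sqnn[of "dist z p"] sqnn[of "dist z q"] by linarith+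
    then have "\<bar>fst c - fst cp\<bar> \<le> 1 \<and> \<bar>snd c - snd cp\<bar> \<le> 1"
         "\<bar>fst c - fst cq\<bar> \<le> 1 \<and> \<bar>snd c - snd cq\<bar> \<le> 1"
      using smallD[OF z(1) assms(1)] smallD[OF z(1) assms(2)] by auto
    moreover have "\<bar>fst cp - fst cq\<bar> \<le> 1 \<and> \<bar>snd cp - snd cq\<bar> \<le> 1"
      using smallD[OF assms(1,2) d2] .
    ultimately have "(fst cp, snd cp) = (fst cq, snd cq)"
      using nX[OF c] unfolding nX5_def by (intro p3int) auto
    then show False using assms(3) by simp
  qed
  show ?thesis using P1 P2 P3 by blast
qed

end
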